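(* Let $\mu$ be a Borel probability measure on a finite-dimensional real Hilbert space $V$ with compact support $\Omega$, let $A\in\mathrm{hull}(\Omega)$, and let $\eta>0$, $\delta\in(0,1)$. Suppose $A$ is in the $(\eta,\delta)$-interior of $\mu$ and $Y^\star\in V_{\mathcal L}$ minimizes $F_A$ over $V_{\mathcal L}$. Then $\|Y^\star\|\le \frac{1}{\eta}\log\frac{1}{\delta}$.
   Context: $F_A(Y)=\langle Y,A\rangle+\log\int_\Omega e^{-\langle Y,X\rangle}d\mu(X)=\log\int_\Omega e^{-\langle Y,X-A\rangle}d\mu(X)$. $V_{\mathcal L}$ is the linear subspace parallel to the affine hull $\mathrm{aff}(\Omega)$. The $(0,\delta)$-interior of $\mu$ is the set of $A'\in\mathrm{hull}(\Omega)$ such that for every $Y\in V_{\mathcal L}$, $\mu(\{X\in\Omega:\langle X-A',Y\rangle\ge 0\})>\delta$. The $(\eta,\delta)$-interior of $\mu$ is the set of $A\in\mathrm{hull}(\Omega)$ such that every $A'\in\mathrm{aff}(\Omega)$ with $\|A'-A\|<\eta$ lies in the $(0,\delta)$-interior of $\mu$. *)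

theory Defs
  imports "HOL-Analysis.Analysis" "HOL-Probability.Probability"
begin

text \<open>Support of a Borel measure: the set of points every open ball around which has positive measure
  (the smallest closed set of full measure, in a separable metric space).\<close>
definition measure_support :: "'a::metric_space measure \<Rightarrow> 'a set" where
  "measure_support \<mu> = {x. \<forall>e>0. emeasure \<mu> (ball x e) > 0}"

definition parallel_subspace :: "'a::real_vector set \<Rightarrow> 'a set" where
  "parallel_subspace \<Omega> = {X - Z | X Z. X \<in> affine hull \<Omega> \<and> Z \<in> affine hull \<Omega>}"

definition F_fun :: "'a::euclidean_space measure \<Rightarrow> 'a \<Rightarrow> 'a \<Rightarrow> real" where
  "F_fun \<mu> A Y = ln (\<integral>X. exp (- (Y \<bullet> (X - A))) \<partial>\<mu>)"

definition zero_delta_interior :: "'a::euclidean_space measure \<Rightarrow> real \<Rightarrow> 'a set" where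
  "zero_delta_interior \<mu> \<delta> =
     {A'. A' \<in> convex hull (measure_support \<mu>) \<and>
          (\<forall>Y\<in>parallel_subspace (measure_support \<mu>).
             measure \<mu> {X \<in> measure_support \<mu>. (X - A') \<bullet> Y \<ge> 0} > \<delta>)}"

definition eta_delta_interior :: "'a::euclidean_space measure \<Rightarrow> real \<Rightarrow> real \<Rightarrow> 'a set" where
  "eta_delta_interior \<mu> \<eta> \<delta> =
     {A. A \<in> convex hull (measure_support \<mu>) \<and>
         (\<forall>A'\<in>affine hull (measure_support \<mu>). norm (A' - A) < \<eta> \<longrightarrow>
             A' \<in> zero_delta_interior \<mu> \<delta>)}"

end

theory Submission
  imports Defs
begin

lemma support_AE:
  fixes \<mu> :: "'a::euclidean_space measure"
  assumes sets: "sets \<mu> = sets borel"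
  shows "AE x in \<mu>. x \<in> measure_support \<mu>"
proof -
  define F where "F = {ball x e | x e. e > 0 \<and> emeasure \<mu> (ball x e) = 0}"
  obtain F' where F': "F' \<subseteq> F" "countable F'" "\<Union>F' = \<Union>F"
    using Lindelof[of F] unfolding F_def by auto
  have "(\<Union>B\<in>F'. B) \<in> null_sets \<mu>"
  proof (rule null_sets_UN'[OF F'(2)])
    fix B assume "B \<in> F'"
    then have "B \<in> F" using F' by auto
    then obtain x e where "B = ball x e" "emeasure \<mu> (ball x e) = 0" unfolding F_def by auto
    moreover have "ball x e \<in> sets \<mu>" using sets by auto
    ultimately show "B \<in> null_sets \<mu>" by auto
  qed
  moreover have "{x \<in> space \<mu>. x \<notin> measure_support \<mu>} \<subseteq> (\<Union>B\<in>F'. B)"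
  proof
    fix x assume "x \<in> {x \<in> space \<mu>. x \<notin> measure_support \<mu>}"
    then obtain e where "e > 0" "\<not> emeasure \<mu> (ball x e) > 0"
      unfolding measure_support_def by auto
    then have "ball x e \<in> F" unfolding F_def by (auto simp: zero_less_iff_neq_zero)
    moreover have "x \<in> ball x e" using \<open>e>0\<close> by simp
    ultimately show "x \<in> (\<Union>B\<in>F'. B)" using F'(3) by blast
  qed
  ultimately show ?thesis by (rule AE_I')
qed

theorem mainTheorem3:
  fixes \<mu> :: "'a::euclidean_space measure"
    and A Ystar :: 'a and \<eta> \<delta> :: real
  assumes "prob_space \<mu>"
    and "sets \<mu> = sets borel"
    and "compact (measure_support \<mu>)"
    and "A \<in> convex hull (measure_support \<mu>)"
    and "\<eta> > 0" and "0 < \<delta>" and "\<delta> < 1"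
    and "A \<in> eta_delta_interior \<mu> \<eta> \<delta>"
    and "Ystar \<in> parallel_subspace (measure_support \<mu>)"
    and "\<forall>Y\<in>parallel_subspace (measure_support \<mu>). F_fun \<mu> A Ystar \<le> F_fun \<mu> A Y"
  shows "norm Ystar \<le> (1 / \<eta>) * ln (1 / \<delta>)"
proof -
  let ?S = "measure_support \<mu>"
  let ?H = "affine hull ?S"
  interpret P: prob_space \<mu> by fact
  have sets: "sets \<mu> = sets borel" by fact
  have Lpos: "ln (1/\<delta>) > 0" using assms(6,7) by simp
  have AH: "A \<in> ?H" using assms(4) convex_hull_subset_affine_hull by blast
  have affH: "affine ?H" by simp
  have "0 \<in> parallel_subspace ?S" unfolding parallel_subspace_def using AH by force
  then have F0: "F_fun \<mu> A Ystar \<le> F_fun \<mu> A 0" using assms(10) by blast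
  have "F_fun \<mu> A 0 = 0" unfolding F_fun_def by (simp add: P.prob_space)
  with F0 have Fle: "F_fun \<mu> A Ystar \<le> 0" by simp
  define f where "f = (\<lambda>X. exp (- (Ystar \<bullet> (X - A))))"
  have fmeas: "f \<in> borel_measurable \<mu>"
    unfolding f_def measurable_cong_sets[OF sets refl] by (intro borel_measurable_continuous_onI continuous_intros)
  have cont: "continuous_on ?S f" unfolding f_def by (intro continuous_intros)
  obtain B where B: "\<forall>x\<in>?S. norm (f x) \<le> B"
    using compact_imp_bounded[OF compact_continuous_image[OF cont assms(3)]]
    unfolding bounded_iff by auto
  have fint: "integrable \<mu> f"
    apply (rule P.integrable_const_bound[where B=B])
    using support_AE[OF sets] B apply (auto elim!: eventually_mono)[1]
    by (rule fmeas)
  show ?thesis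
  proof (cases "Ystar = 0")
    case True then show ?thesis using Lpos assms(5) by simp
  next
    case False
    define N where "N = norm Ystar"
    have Npos: "N > 0" using False N_def by simp
    define u where "u = (1/N) *\<^sub>R Ystar"
    have nu: "norm u = 1" using Npos unfolding u_def N_def by simp
    obtain X Z where XZ: "Ystar = X - Z" "X \<in> ?H" "Z \<in> ?H"
      using assms(9) unfolding parallel_subspace_def by auto
    have key: "t * N \<le> ln (1/\<delta>)" if t: "0 < t" "t < \<eta>" for t
    proof -
      define A' where "A' = A - t *\<^sub>R u"
      have A'H: "A' \<in> ?H" unfolding A'_def u_def XZ(1)
        using mem_affine_3_minus2[OF affH AH XZ(2) XZ(3), of "t/N"] by (simp add: scaleR_scaleR)
      have "norm (A' - A) = t" unfolding A'_def using nu t by simp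
      then have A'I: "A' \<in> zero_delta_interior \<mu> \<delta>"
        using assms(8) A'H t unfolding eta_delta_interior_def by auto
      have "A - u \<in> ?H" unfolding u_def XZ(1)
        using mem_affine_3_minus2[OF affH AH XZ(2) XZ(3), of "1/N"] by simp
      then have mu: "-u \<in> parallel_subspace ?S"
        unfolding parallel_subspace_def using AH by force
      define T where "T = {X \<in> ?S. (X - A') \<bullet> (-u) \<ge> 0}"
      have Tm: "measure \<mu> T > \<delta>" using A'I mu unfolding zero_delta_interior_def T_def by auto
      have Tsets: "T \<in> sets \<mu>"
      proof -
        have "closed ?S" using assms(3) compact_imp_closed by blast
        moreover have "closed {X. (X - A') \<bullet> (-u) \<ge> 0}"
          by (intro closed_Collect_le continuous_intros)
        ultimately have "closed T" unfolding T_def by (simp add: Collect_conj_eq closed_Int)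
        then show ?thesis using sets by simp
      qed
      have pt: "indicator T X * exp (t * N) \<le> f X" for X
      proof (cases "X \<in> T")
        case True
        then have "(X - A') \<bullet> u \<le> 0" unfolding T_def by simp
        moreover have "u \<bullet> u = 1" using nu by (simp add: norm_eq_1)
        ultimately have "(X - A) \<bullet> u \<le> - t" unfolding A'_def
          by (simp add: inner_diff_left inner_diff_right inner_commute algebra_simps)
        then have "Ystar \<bullet> (X - A) \<le> - t * N"
          using Npos unfolding u_def
          by (simp add: inner_commute field_simps)
        then show ?thesis using True unfolding f_def by simp
      qed (simp add: f_def)
      have "measure \<mu> T * exp (t * N) \<le> integral\<^sup>L \<mu> f"
      proof -
        have "integral\<^sup>L \<mu> (\<lambda>X. indicator T X * exp (t * N)) \<le> integral\<^sup>L \<mu> f"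
          apply (rule integral_mono[OF _ fint pt])
          using Tsets by (intro integrable_mult_left) (simp add: P.emeasure_eq_measure)
        moreover have "integral\<^sup>L \<mu> (\<lambda>X. indicator T X * exp (t * N)) = measure \<mu> T * exp (t * N)"
          using Tsets by (simp add: Int_absorb2 sets.sets_into_space)
        ultimately show ?thesis by simp
      qed
      moreover have "\<delta> * exp (t * N) < measure \<mu> T * exp (t * N)" using Tm by simp
      ultimately have lb: "\<delta> * exp (t * N) < integral\<^sup>L \<mu> f" by linarith
      then have ipos: "integral\<^sup>L \<mu> f > 0" using assms(6) by (smt (verit) exp_gt_zero mult_pos_pos)
      have "ln (integral\<^sup>L \<mu> f) \<le> 0" using Fle unfolding F_fun_def f_def by simp
      then have "integral\<^sup>L \<mu> f \<le> 1" using ipos by simp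
      with lb have "\<delta> * exp (t * N) < 1" by simp
      then have "exp (t * N) < 1/\<delta>" using assms(6) by (simp add: field_simps)
      then have "ln (exp (t*N)) < ln (1/\<delta>)" using assms(6) by (subst ln_less_cancel_iff) auto
      then show ?thesis by simp
    qed
    show ?thesis
    proof (rule ccontr)
      assume "\<not> ?thesis"
      then have h: "ln (1/\<delta>) / N < \<eta>" using Npos assms(5) unfolding N_def[symmetric]
        by (simp add: field_simps)
      define t where "t = (ln (1/\<delta>) / N + \<eta>) / 2"
      have "0 < t" "t < \<eta>" using h Lpos Npos using assms(5) unfolding t_def by (auto intro!: add_pos_pos divide_pos_pos)
      from key[OF this] have "t \<le> ln (1/\<delta>) / N" using Npos by (simp add: pos_le_divide_eq)
      moreover have "\<And>a b::real. a < b \<Longrightarrow> (a + b) / 2 \<le> a \<Longrightarrow> False" by (simp add: field_simps)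
      ultimately show False using h unfolding t_def by blast
    qed
  qed
qed

end
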